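(* Let $D$ be the commutative unital ring of diagonal $2\times2$ matrices with entries in $\mathbb{Z}/2\mathbb{Z}$, and let $B=\begin{pmatrix}1&0\\0&0\end{pmatrix}$, $C=\begin{pmatrix}0&0\\0&1\end{pmatrix}$. The irreducible $\lambda$-quiddities over $D$ are exactly, up to cyclic permutation: - $(\mathrm{Id},\mathrm{Id},\mathrm{Id})$; - $(B,C,B,C)$, $(B,0,B,0)$, $(C,0,C,0)$, $(0,0,0,0)$; - $(B,B,B,B,B,B)$ and $(C,C,C,C,C,C)$.
   Context: For $a_1,\ldots,a_n$ in a commutative unital ring $A$ (with unit $1$), $M_n(a_1,\ldots,a_n)=\begin{pmatrix}a_n&-1\\1&0\end{pmatrix}\cdots\begin{pmatrix}a_1&-1\\1&0\end{pmatrix}$ (a $2\times2$ matrix over $A$). An $n$-tuple $(a_1,\ldots,a_n)\in A^n$ is a $\lambda$-quiddity over $A$ if $M_n(a_1,\ldots,a_n)=\pm\mathrm{Id}$. For $(a_1,\ldots,a_n)\in A^n$, $(b_1,\ldots,b_m)\in A^m$, define $(a_1,\ldots,a_n)\oplus(b_1,\ldots,b_m)=(a_1+b_m,a_2,\ldots,a_{n-1},a_n+b_1,b_2,\ldots,b_{m-1})$. Write $(a_1,\ldots,a_n)\sim(b_1,\ldots,b_n)$ if $(b_1,\ldots,b_n)$ is obtained from $(a_1,\ldots,a_n)$ or from $(a_n,\ldots,a_1)$ by a cyclic permutation. A $\lambda$-quiddity $(c_1,\ldots,c_n)$ with $n\ge3$ is reducible if there exist a $\lambda$-quiddity $(b_1,\ldots,b_l)$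 and a tuple $(a_1,\ldots,a_m)$ with $l,m\ge3$ and $(c_1,\ldots,c_n)\sim(a_1,\ldots,a_m)\oplus(b_1,\ldots,b_l)$; it is irreducible otherwise (by convention $(0,0)$ is reducible). *)

theory Defs
  imports "HOL-Analysis.Analysis" "HOL-Library.Z2"
begin

text \<open>2x2 matrices over a commutative unital ring, as tuples (a11, a12, a21, a22).\<close>
type_synonym 'a mat2 = "'a \<times> 'a \<times> 'a \<times> 'a"

fun mmul2 :: "'a::comm_ring_1 mat2 \<Rightarrow> 'a mat2 \<Rightarrow> 'a mat2" where
  "mmul2 (a, b, c, d) (e, f, g, h) = (a*e + b*g, a*f + b*h, c*e + d*g, c*f + d*h)"

definition id2 :: "'a::comm_ring_1 mat2" where
  "id2 = (1, 0, 0, 1)"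

definition negid2 :: "'a::comm_ring_1 mat2" where
  "negid2 = (-1, 0, 0, -1)"

definition elem2 :: "'a::comm_ring_1 \<Rightarrow> 'a mat2" where
  "elem2 a = (a, -1, 1, 0)"

text \<open>M_n(a_1,...,a_n) = elem a_n * ... * elem a_1\<close>
definition Mq :: "'a::comm_ring_1 list \<Rightarrow> 'a mat2" where
  "Mq xs = foldl (\<lambda>M a. mmul2 (elem2 a) M) id2 xs"

definition lambda_quiddity :: "'a::comm_ring_1 list \<Rightarrow> bool" where
  "lambda_quiddity xs \<longleftrightarrow> Mq xs = id2 \<or> Mq xs = negid2"

text \<open>(a_1..a_n) \<oplus> (b_1..b_m) = (a_1+b_m, a_2, ..., a_{n-1}, a_n+b_1, b_2, ..., b_{m-1})\<close>
definition qsum :: "'a::comm_ring_1 list \<Rightarrow> 'a list \<Rightarrow> 'a list" where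
  "qsum as bs = [hd as + last bs] @ butlast (tl as) @ [last as + hd bs] @ butlast (tl bs)"

definition qsim :: "'a list \<Rightarrow> 'a list \<Rightarrow> bool" where
  "qsim xs ys \<longleftrightarrow> (\<exists>k. ys = rotate k xs \<or> ys = rotate k (rev xs))"

definition reducible_q :: "'a::comm_ring_1 list \<Rightarrow> bool" where
  "reducible_q cs \<longleftrightarrow> (\<exists>as bs. lambda_quiddity bs \<and> length bs \<ge> 3 \<and> length as \<ge> 3
      \<and> qsim cs (qsum as bs))"

definition irreducible_q :: "'a::comm_ring_1 list \<Rightarrow> bool" where
  "irreducible_q cs \<longleftrightarrow> lambda_quiddity cs \<and> length cs \<ge> 3 \<and> \<not> reducible_q cs"

text \<open>The ring D of diagonal 2x2 matrices over Z/2Z, represented by their diagonal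
  (componentwise operations), and the elements B = diag(1,0), C = diag(0,1).\<close>
type_synonym D = "bit ^ 2"

definition Bd :: D where "Bd = (\<chi> i. if i = 1 then 1 else 0)"
definition Cd :: D where "Cd = (\<chi> i. if i = 1 then 0 else 1)"

end

theory Submission
  imports Defs
begin

lemma mmul2_assoc: "mmul2 (mmul2 A B) C = mmul2 A (mmul2 B C)"
  by (cases A; cases B; cases C) (simp add: algebra_simps)

lemma mmul2_id_right[simp]: "mmul2 A id2 = A"
  by (cases A) (simp add: id2_def)

lemma mmul2_id_left[simp]: "mmul2 id2 A = A"
  by (cases A) (simp add: id2_def)

lemma Mq_foldl: "foldl (\<lambda>M a. mmul2 (elem2 a) M) M0 ys = mmul2 (Mq ys) M0"
proof (induction ys arbitrary: M0)
  case Nil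
  then show ?case by (simp add: Mq_def)
next
  case (Cons y ys)
  have "Mq (y # ys) = mmul2 (Mq ys) (elem2 y)"
    unfolding Mq_def using Cons.IH[of "mmul2 (elem2 y) id2"] by (simp add: Mq_def)
  then show ?case using Cons.IH[of "mmul2 (elem2 y) M0"] by (simp add: mmul2_assoc)
qed

lemma Mq_append: "Mq (xs @ ys) = mmul2 (Mq ys) (Mq xs)"
proof -
  have "Mq (xs @ ys) = foldl (\<lambda>M a. mmul2 (elem2 a) M) (Mq xs) ys"
    unfolding Mq_def by (rule foldl_append)
  then show ?thesis by (simp only: Mq_foldl)
qed

lemma Mq_single: "Mq [a] = elem2 a"
  by (simp add: Mq_def)

fun det2 :: "'a::comm_ring_1 mat2 \<Rightarrow> 'a" where
  "det2 (a, b, c, d) = a * d - b * c"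

lemma det2_mul: "det2 (mmul2 A B) = det2 A * det2 B"
  by (cases A; cases B) (simp add: algebra_simps)

lemma det2_Mq: "det2 (Mq xs) = 1"
proof (induction xs rule: rev_induct)
  case Nil
  then show ?case by (simp add: Mq_def id2_def)
next
  case (snoc x xs)
  then show ?case by (simp add: Mq_append Mq_single det2_mul elem2_def)
qed

lemma list_split3: "length xs \<ge> 2 \<Longrightarrow> xs = hd xs # butlast (tl xs) @ [last xs]"
  by (cases xs; cases "tl xs") auto

section \<open>Reducibility via suffixes\<close>

lemma red_suffix:
  fixes c :: "'a::comm_ring_1 list"
  assumes z: "rotate k c = u @ w" and u: "length u \<ge> 3" and w: "w \<noteq> []"
    and p: "fst (Mq w) = 1"
  shows "reducible_q c"
proof -
  obtain q r s where M: "Mq w = (1, q, r, s)" using p by (cases "Mq w") auto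
  have "det2 (Mq w) = 1" by (rule det2_Mq)
  then have s: "s = 1 + q * r" using M by (simp add: algebra_simps)
  define bs where "bs = (-q) # w @ [r]"
  have "Mq bs = mmul2 (elem2 r) (mmul2 (Mq w) (elem2 (-q)))"
    unfolding bs_def using Mq_append[of "(-q) # w" "[r]"] Mq_append[of "[-q]" w]
    by (simp add: Mq_single)
  also have "\<dots> = negid2" using M s by (simp add: elem2_def negid2_def algebra_simps)
  finally have qb: "lambda_quiddity bs" by (simp add: lambda_quiddity_def)
  have lb: "length bs \<ge> 3" using w by (cases w) (simp_all add: bs_def)
  have u': "u = hd u # butlast (tl u) @ [last u]" using u list_split3[of u] by simp
  define as where "as = (hd u - r) # butlast (tl u) @ [last u + q]"
  have la: "length as \<ge> 3" using u by (simp add: as_def)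
  have "qsum as bs = u @ w"
    unfolding qsum_def as_def bs_def by (subst (3) u') simp
  then have "qsim c (qsum as bs)" using z unfolding qsim_def by metis
  then show ?thesis unfolding reducible_q_def using qb lb la by blast
qed

lemma qsum_obstr:
  fixes as bs :: "'a::comm_ring_1 list"
  assumes qb: "lambda_quiddity bs" and lb: "length bs \<ge> 3" and la: "length as \<ge> 3"
  shows "\<exists>u w. qsum as bs = u @ w \<and> length u \<ge> 3 \<and> w \<noteq> [] \<and>
           (fst (Mq w) = 1 \<or> fst (Mq w) = -1)"
proof -
  define w where "w = butlast (tl bs)"
  obtain b1 bl where bsd: "bs = b1 # w @ [bl]"
  proof -
    have "2 \<le> length bs" using lb by simp
    then have "bs = hd bs # w @ [last bs]" using list_split3[of bs] unfolding w_def by simp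
    then show ?thesis using that by blast
  qed
  have "length w = length bs - 2" by (simp add: w_def)
  then have wne: "w \<noteq> []" using lb by auto
  obtain p q r s where M: "Mq w = (p, q, r, s)" by (cases "Mq w") auto
  have "Mq bs = mmul2 (elem2 bl) (mmul2 (Mq w) (elem2 b1))"
    unfolding bsd using Mq_append[of "[b1] @ w" "[bl]"] Mq_append[of "[b1]" w]
    by (simp add: Mq_single)
  then have "snd (snd (snd (Mq bs))) = - p" using M by (simp add: elem2_def)
  then have "p = 1 \<or> p = -1" using qb
    by (auto simp: lambda_quiddity_def id2_def negid2_def) (metis minus_minus)+
  moreover have "qsum as bs = ([hd as + bl] @ butlast (tl as) @ [last as + b1]) @ w"
    by (simp add: qsum_def bsd)
  moreover have "length ([hd as + bl] @ butlast (tl as) @ [last as + b1]) \<ge> 3"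
    using la by simp
  ultimately show ?thesis using M wne
    by (intro exI[of _ "[hd as + bl] @ butlast (tl as) @ [last as + b1]"] exI[of _ w]) auto
qed

lemma D_eq: "(x::D) = y \<longleftrightarrow> x$1 = y$1 \<and> x$2 = y$2"
  by (auto simp: vec_eq_iff forall_2)
lemma Bd1[simp]: "Bd$1 = 1" "Bd$2 = 0" "Cd$1 = 0" "Cd$2 = 1" by (auto simp: Bd_def Cd_def)
lemma bneg: "-(b::bit) = b" by (cases b) auto
lemma neg_D[simp]: "-(x::D) = x" by (simp add: D_eq bneg)
lemma diff_D[simp]: "x - (y::D) = x + y" by (simp add: diff_conv_add_uminus)
lemma tab[simp]: "Bd*Bd = Bd" "Cd*Cd=Cd" "Bd*Cd=0" "Cd*Bd = 0" "Bd+Bd=0" "Cd+Cd=0" "Bd+Cd=1" "Cd+Bd=1"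
 "1+1=(0::D)" "1+Bd=Cd" "Bd+1=Cd" "1+Cd=Bd" "Cd+1=Bd"
 "Bd\<noteq>0" "Bd\<noteq>1" "Cd\<noteq>0" "Cd\<noteq>1" "Bd\<noteq>Cd" "Cd\<noteq>Bd" "0\<noteq>Bd" "1\<noteq>Bd"
 "0\<noteq>Cd" "1\<noteq>Cd" "(0::D)\<noteq>1" "(1::D)\<noteq>0"
  by (simp_all add: D_eq)
lemma num_D[simp]: "(2::D) = 0" "(3::D) = 1"
  by (simp_all add: D_eq)
lemma D_cases: "(x::D) = 0 \<or> x = 1 \<or> x = Bd \<or> x = Cd"
proof -
  have a: "x$1 = 0 \<or> x$1 = 1" "x$2 = 0 \<or> x$2 = 1" by (cases "x$1"; simp) (cases "x$2"; simp)
  show ?thesis unfolding D_eq using a by fastforce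
qed

fun sufOK :: "nat \<Rightarrow> D list \<Rightarrow> bool" where
  "sufOK n [] = False"
| "sufOK 0 (a # z) = (fst (Mq (a # z)) = 1 \<or> sufOK 0 z)"
| "sufOK (Suc n) (a # z) = sufOK n z"

lemma sufOK_iff: "sufOK n z \<longleftrightarrow> (\<exists>u w. z = u @ w \<and> length u \<ge> n \<and> w \<noteq> [] \<and> fst (Mq w) = 1)"
proof (induction z arbitrary: n)
  case Nil
  then show ?case by simp
next
  case (Cons a z)
  show ?case
  proof (cases n)
    case 0
    have "(\<exists>u w. a # z = u @ w \<and> w \<noteq> [] \<and> fst (Mq w) = 1) \<longleftrightarrow>
          fst (Mq (a # z)) = 1 \<or> (\<exists>u w. z = u @ w \<and> w \<noteq> [] \<and> fst (Mq w) = 1)"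
    proof
      assume "\<exists>u w. a # z = u @ w \<and> w \<noteq> [] \<and> fst (Mq w) = 1"
      then obtain u w where h: "a # z = u @ w" "w \<noteq> []" "fst (Mq w) = 1" by blast
      show "fst (Mq (a # z)) = 1 \<or> (\<exists>u w. z = u @ w \<and> w \<noteq> [] \<and> fst (Mq w) = 1)"
      proof (cases u)
        case Nil then show ?thesis using h by simp
      next
        case (Cons b u') then show ?thesis using h by auto
      qed
    next
      assume "fst (Mq (a # z)) = 1 \<or> (\<exists>u w. z = u @ w \<and> w \<noteq> [] \<and> fst (Mq w) = 1)"
      then show "\<exists>u w. a # z = u @ w \<and> w \<noteq> [] \<and> fst (Mq w) = 1"
      proof
        assume "fst (Mq (a # z)) = 1" then show ?thesis by (intro exI[of _ "[]"] exI[of _ "a # z"]) simp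
      next
        assume "\<exists>u w. z = u @ w \<and> w \<noteq> [] \<and> fst (Mq w) = 1"
        then obtain u w where "z = u @ w" "w \<noteq> []" "fst (Mq w) = 1" by blast
        then show ?thesis by (intro exI[of _ "a # u"] exI[of _ w]) simp
      qed
    qed
    then show ?thesis using 0 Cons.IH[of 0] by simp
  next
    case (Suc m)
    have "(\<exists>u w. a # z = u @ w \<and> length u \<ge> Suc m \<and> w \<noteq> [] \<and> fst (Mq w) = 1) \<longleftrightarrow>
          (\<exists>u w. z = u @ w \<and> length u \<ge> m \<and> w \<noteq> [] \<and> fst (Mq w) = 1)"
    proof
      assume "\<exists>u w. a # z = u @ w \<and> length u \<ge> Suc m \<and> w \<noteq> [] \<and> fst (Mq w) = 1"
      then obtain u w where h: "a # z = u @ w" "length u \<ge> Suc m" "w \<noteq> []" "fst (Mq w) = 1" by blast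
      then obtain u' where "u = a # u'" by (cases u) auto
      then show "\<exists>u w. z = u @ w \<and> length u \<ge> m \<and> w \<noteq> [] \<and> fst (Mq w) = 1"
        using h by (intro exI[of _ u'] exI[of _ w]) auto
    next
      assume "\<exists>u w. z = u @ w \<and> length u \<ge> m \<and> w \<noteq> [] \<and> fst (Mq w) = 1"
      then obtain u w where "z = u @ w" "length u \<ge> m" "w \<noteq> []" "fst (Mq w) = 1" by blast
      then show "\<exists>u w. a # z = u @ w \<and> length u \<ge> Suc m \<and> w \<noteq> [] \<and> fst (Mq w) = 1"
        by (intro exI[of _ "a # u"] exI[of _ w]) simp
    qed
    then show ?thesis using Suc Cons.IH[of m] by simp
  qed
qed

lemma reducible_D:
  fixes c :: "D list"
  shows "reducible_q c \<longleftrightarrow> (\<exists>k. sufOK 3 (rotate k c) \<or> sufOK 3 (rotate k (rev c)))"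
proof
  assume "reducible_q c"
  then obtain as bs where h: "lambda_quiddity bs" "length bs \<ge> 3" "length as \<ge> 3" "qsim c (qsum as bs)"
    unfolding reducible_q_def by blast
  obtain u w where uw: "qsum as bs = u @ w" "length u \<ge> 3" "w \<noteq> []" "fst (Mq w) = 1"
    using qsum_obstr[OF h(1-3)] by auto
  have s: "sufOK 3 (qsum as bs)" unfolding sufOK_iff using uw by blast
  from h(4) obtain k where "qsum as bs = rotate k c \<or> qsum as bs = rotate k (rev c)"
    unfolding qsim_def by blast
  then show "\<exists>k. sufOK 3 (rotate k c) \<or> sufOK 3 (rotate k (rev c))" using s by metis
next
  assume "\<exists>k. sufOK 3 (rotate k c) \<or> sufOK 3 (rotate k (rev c))"
  then obtain k where "sufOK 3 (rotate k c) \<or> sufOK 3 (rotate k (rev c))" by blast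
  then show "reducible_q c"
  proof
    assume "sufOK 3 (rotate k c)"
    then obtain u w where "rotate k c = u @ w" "length u \<ge> 3" "w \<noteq> []" "fst (Mq w) = 1"
      unfolding sufOK_iff by blast
    then show ?thesis using red_suffix by blast
  next
    assume "sufOK 3 (rotate k (rev c))"
    then obtain u w where "rotate k (rev c) = u @ w" "length u \<ge> 3" "w \<noteq> []" "fst (Mq w) = 1"
      unfolding sufOK_iff by blast
    then have "reducible_q (rev c)" using red_suffix by blast
    then show ?thesis unfolding reducible_q_def qsim_def by (metis rev_rev_ident)
  qed
qed

definition L :: "D list set" where
  "L = {[1,1,1], [Bd,Cd,Bd,Cd], [Cd,Bd,Cd,Bd], [Bd,0,Bd,0], [0,Bd,0,Bd], [Cd,0,Cd,0], [0,Cd,0,Cd],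
        [0,0,0,0], [Bd,Bd,Bd,Bd,Bd,Bd], [Cd,Cd,Cd,Cd,Cd,Cd]}"

lemma L_rot1: "z \<in> L \<Longrightarrow> rotate1 z \<in> L"
  by (auto simp: L_def)

lemma L_rot: "z \<in> L \<Longrightarrow> rotate k z \<in> L"
  by (induction k) (auto simp: L_rot1)

lemma L_rev: "z \<in> L \<Longrightarrow> rev z \<in> L"
  by (auto simp: L_def)

lemma L_good: "z \<in> L \<Longrightarrow> lambda_quiddity z \<and> length z \<ge> 3 \<and> \<not> sufOK 3 z"
  by (auto simp: L_def lambda_quiddity_def Mq_def id2_def negid2_def elem2_def numeral_eq_Suc)

lemma L_irr: "z \<in> L \<Longrightarrow> irreducible_q z"
  unfolding irreducible_q_def reducible_D using L_good L_rot L_rev by blast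


lemma rot_last:
  assumes "i < length c"
  shows "rotate (Suc i) c = (drop (Suc i) c @ take i c) @ [c ! i]"
proof (cases "Suc i = length c")
  case True
  then have "rotate (Suc i) c = c" by simp
  also have "c = take (Suc i) c" using True by simp
  also have "\<dots> = take i c @ [c ! i]" using assms by (simp add: take_Suc_conv_app_nth)
  finally show ?thesis using True by simp
next
  case False
  then have "Suc i mod length c = Suc i" using assms by simp
  then show ?thesis using assms by (simp add: rotate_drop_take take_Suc_conv_app_nth)
qed

lemma rot_pair:
  assumes "Suc i < length c"
  shows "rotate (Suc (Suc i)) c = (drop (Suc (Suc i)) c @ take i c) @ [c ! i, c ! Suc i]"
proof (cases "Suc (Suc i) = length c")
  case True
  then have "rotate (Suc (Suc i)) c = c" by simp
  also have "c = take (Suc (Suc i)) c" using True by simp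
  also have "\<dots> = take i c @ [c ! i, c ! Suc i]" using assms
    by (simp add: take_Suc_conv_app_nth)
  finally show ?thesis using True by simp
next
  case False
  then have "Suc (Suc i) mod length c = Suc (Suc i)" using assms by simp
  then show ?thesis using assms by (simp add: rotate_drop_take take_Suc_conv_app_nth)
qed

lemma len3: "length xs = 3 \<Longrightarrow> \<exists>a b c. xs = [a, b, c]"
  by (auto simp: length_Suc_conv numeral_eq_Suc)
lemma len4: "length xs = 4 \<Longrightarrow> \<exists>a b c d. xs = [a, b, c, d]"
  by (auto simp: length_Suc_conv numeral_eq_Suc)

lemma Mq1: "fst (Mq [x]) = (x::D)" by (simp add: Mq_def elem2_def id2_def)
lemma Mq2: "fst (Mq [x, y]) = y * x + (1::D)" by (simp add: Mq_def elem2_def id2_def)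

lemma forward:
  fixes c :: "D list"
  assumes irr: "irreducible_q c"
  shows "c \<in> L"
proof -
  have lq: "lambda_quiddity c" and len: "length c \<ge> 3"
    and nb: "\<And>k u w. rotate k c = u @ w \<Longrightarrow> length u \<ge> 3 \<Longrightarrow> w \<noteq> [] \<Longrightarrow> fst (Mq w) = 1 \<Longrightarrow> False"
    using irr unfolding irreducible_q_def reducible_D sufOK_iff by blast+
  have no1: "c ! i \<noteq> 1" if "length c \<ge> 4" "i < length c" for i
  proof
    assume h: "c ! i = 1"
    have "length (drop (Suc i) c @ take i c) \<ge> 3" using that by simp
    then show False using nb[OF rot_last[OF that(2)]] h by (simp add: Mq1)
  qed
  have nz: "c ! Suc i * c ! i \<noteq> 0" if "length c \<ge> 5" "Suc i < length c" for i
  proof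
    assume h: "c ! Suc i * c ! i = 0"
    have "length (drop (Suc (Suc i)) c @ take i c) \<ge> 3" using that by simp
    then show False using nb[OF rot_pair[OF that(2)]] h by (simp add: Mq2)
  qed
  consider "length c = 3" | "length c = 4" | "length c \<ge> 5" using len by linarith
  then show ?thesis
  proof cases
    case 1
    then obtain x y z where c: "c = [x, y, z]" using len3 by blast
    show ?thesis using lq D_cases[of x] D_cases[of y] D_cases[of z] unfolding c
      by (elim disjE) (simp_all add: L_def lambda_quiddity_def Mq_def id2_def negid2_def elem2_def)
  next
    case 2
    then obtain x y z t where c: "c = [x, y, z, t]" using len4 by blast
    have "x \<noteq> 1" "y \<noteq> 1" "z \<noteq> 1" "t \<noteq> 1" using no1[of 0] no1[of 1] no1[of 2] no1[of 3] 2 c by auto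
    then show ?thesis using lq D_cases[of x] D_cases[of y] D_cases[of z] D_cases[of t] unfolding c
      by (elim disjE) (simp_all add: L_def lambda_quiddity_def Mq_def id2_def negid2_def elem2_def)
  next
    case 3
    define x where "x = c ! 0"
    have step: "c ! Suc i = c ! i \<and> c ! i \<noteq> 0" if "Suc i < length c" for i
    proof -
      have "c ! i \<noteq> 1" "c ! Suc i \<noteq> 1" using no1 3 that by auto
      moreover have "c ! Suc i * c ! i \<noteq> 0" using nz 3 that by auto
      ultimately show ?thesis using D_cases[of "c ! i"] D_cases[of "c ! Suc i"] by auto
    qed
    have all: "c ! i = x" if "i < length c" for i
      using that
    proof (induction i)
      case 0 then show ?case by (simp add: x_def)
    next
      case (Suc i) then show ?case using step[of i] by simp
    qed
    have cr: "c = replicate (length c) x"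
      by (rule nth_equalityI) (simp_all add: all)
    have l1: "Suc 0 < length c" "length c \<ge> 4" "0 < length c" using 3 by linarith+
    have "x \<noteq> 0" "x \<noteq> 1" using step[OF l1(1)] no1[OF l1(2,3)] by (simp_all add: x_def)
    then have xBC: "x = Bd \<or> x = Cd" using D_cases[of x] by auto
    consider "length c = 5" | "length c = 6" | "length c \<ge> 7" using 3 by linarith
    then show ?thesis
    proof cases
      case 1
      then show ?thesis using lq xBC cr
        by (auto simp: lambda_quiddity_def Mq_def id2_def negid2_def elem2_def numeral_eq_Suc)
    next
      case 2
      then show ?thesis using xBC cr by (auto simp: L_def numeral_eq_Suc)
    next
      case 3
      define m where "m = length c - 4"
      have lm: "length c = m + 4" using 3 unfolding m_def by linarith
      have "rotate 0 c = replicate m x @ replicate 4 x"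
        using cr lm by (metis replicate_add rotate0 id_apply)
      moreover have "fst (Mq (replicate 4 x)) = 1" using xBC
        by (auto simp: Mq_def id2_def elem2_def numeral_eq_Suc)
      ultimately show ?thesis using nb[of 0 "replicate m x" "replicate 4 x"] 3 lm by simp
    qed
  qed
qed

theorem main_iff:
  fixes c :: "D list"
  shows "irreducible_q c \<longleftrightarrow> c \<in> L"
  using forward L_irr by blast


lemma rhs_iff:
  fixes c :: "D list"
  shows "(\<exists>q \<in> {[1, 1, 1], [Bd, Cd, Bd, Cd], [Bd, 0, Bd, 0], [Cd, 0, Cd, 0], [0, 0, 0, 0],
            [Bd, Bd, Bd, Bd, Bd, Bd], [Cd, Cd, Cd, Cd, Cd, Cd]}. \<exists>k. c = rotate k q) \<longleftrightarrow> c \<in> L"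
    (is "(\<exists>q \<in> ?Q. _) \<longleftrightarrow> _")
proof
  assume "\<exists>q \<in> ?Q. \<exists>k. c = rotate k q"
  then obtain q k where "q \<in> ?Q" "c = rotate k q" by blast
  moreover have "?Q \<subseteq> L" by (auto simp: L_def)
  ultimately show "c \<in> L" using L_rot by blast
next
  have "\<forall>z\<in>L. \<exists>q\<in>?Q. z = rotate 0 q \<or> z = rotate 1 q"
    by (simp add: L_def One_nat_def)
  moreover assume "c \<in> L"
  ultimately show "\<exists>q \<in> ?Q. \<exists>k. c = rotate k q" by blast
qed

theorem proposition3p6:
  fixes c :: "D list"
  shows "irreducible_q c \<longleftrightarrow>
    (\<exists>q \<in> {[1, 1, 1], [Bd, Cd, Bd, Cd], [Bd, 0, Bd, 0], [Cd, 0, Cd, 0], [0, 0, 0, 0],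
            [Bd, Bd, Bd, Bd, Bd, Bd], [Cd, Cd, Cd, Cd, Cd, Cd]}. \<exists>k. c = rotate k q)"
  unfolding rhs_iff by (rule main_iff)

end
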